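(* Let $f,g:[a,b]\to[0,\infty)$, $0\le a<b$, be convex functions with $f,g\in L^1[a,b]$. Then \[ \frac{1}{b-a}\int_a^b f(x)^{\frac{x-a}{b-a}}\, g(x)^{\frac{b-x}{b-a}}\,dx \le \frac13\left[f(b)+g(a)\right]+\frac16\left[g(b)+f(a)\right]. \]
   Context: The convention $0^0=1$ is used in the integrand. *)

theory Defs
  imports "HOL-Analysis.Analysis"
begin

definition pow00 :: "real \<Rightarrow> real \<Rightarrow> real" where
  "pow00 x y = (if x = 0 then (if y = 0 then 1 else 0) else x powr y)"

end

theory Submission
  imports Defs
begin

lemma pow00_young:
  fixes u v t :: real
  assumes "0 \<le> u" "0 \<le> v" "0 \<le> t" "t \<le> 1"
  shows "pow00 u t * pow00 v (1 - t) \<le> t * u + (1 - t) * v"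
proof (cases "u = 0 \<or> v = 0")
  case True
  then show ?thesis using assms
    by (auto simp: pow00_def powr_ge_zero)
next
  case False
  then have "u > 0" "v > 0" using assms by auto
  then show ?thesis using Youngs_inequality_0[of t "1 - t" u v] assms
    by (simp add: pow00_def)
qed

lemma Fderiv: "L > 0 \<Longrightarrow> ((\<lambda>x. L*((((x-a)/L)^2/2 - ((x-a)/L)^3/3)*(A) + ((x-a)/L)^3/3 * B
       - (1-(x-a)/L)^3/3 * C)) has_real_derivative (((x-a)/L)*(1-(x-a)/L)*(A) + ((x-a)/L)^2 * B
       + (1-(x-a)/L)^2 * C)) (at x)"
  apply (rule derivative_eq_intros refl | simp)+
  by (simp add: field_simps power2_eq_square power3_eq_cube)

theorem corollary1:
  fixes f g :: "real \<Rightarrow> real" and a b :: real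
  assumes "0 \<le> a" and "a < b"
    and "convex_on {a..b} f" and "convex_on {a..b} g"
    and "\<And>x. x \<in> {a..b} \<Longrightarrow> f x \<ge> 0"
    and "\<And>x. x \<in> {a..b} \<Longrightarrow> g x \<ge> 0"
    and "set_integrable lborel {a..b} f" and "set_integrable lborel {a..b} g"
  shows "(1 / (b - a)) * (LINT x:{a..b}|lborel.
            pow00 (f x) ((x - a) / (b - a)) * pow00 (g x) ((b - x) / (b - a)))
         \<le> (1/3) * (f b + g a) + (1/6) * (g b + f a)"
proof -
  define L where "L = b - a"
  have L: "L > 0" using assms(2) by (simp add: L_def)
  define P where "P x = ((x-a)/L)*(1-(x-a)/L)*(f a + g b) + ((x-a)/L)^2 * f b
       + (1-(x-a)/L)^2 * g a" for x
  define F where "F x = L*((((x-a)/L)^2/2 - ((x-a)/L)^3/3)*(f a + g b) + ((x-a)/L)^3/3 * f b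
       - (1-(x-a)/L)^3/3 * g a)" for x
  define I where "I x = pow00 (f x) ((x - a) / (b - a)) * pow00 (g x) ((b - x) / (b - a))" for x
  have fa: "f a \<ge> 0" "f b \<ge> 0" "g a \<ge> 0" "g b \<ge> 0" using assms(2,5,6) by auto
  have RHS: "0 \<le> (1/3) * (f b + g a) + (1/6) * (g b + f a)" using fa by simp
  have deriv: "(F has_vector_derivative P x) (at x within {a..b})" for x
    unfolding has_real_derivative_iff_has_vector_derivative[symmetric]
    apply (rule has_field_derivative_at_within)
    unfolding F_def P_def by (rule Fderiv[OF L])
  have hint: "(P has_integral (F b - F a)) {a..b}"
    by (rule fundamental_theorem_of_calculus) (use assms(2) deriv in auto)
  have Fba: "F b - F a = L * ((1/3) * (f b + g a) + (1/6) * (g b + f a))"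
    unfolding F_def using L by (simp add: L_def field_simps power3_eq_cube)
  have Pint: "set_integrable lborel {a..b} P"
    unfolding P_def by (intro borel_integrable_atLeastAtMost' continuous_intros) (use L in auto)
  have PI: "(LINT x:{a..b}|lborel. P x) = F b - F a"
    using set_borel_integral_eq_integral(2)[OF Pint] hint by (simp add: integral_unique)
  have pt: "I x \<le> P x" if x: "x \<in> {a..b}" for x
  proof -
    define t where "t = (x - a) / L"
    have t: "0 \<le> t" "t \<le> 1" using x L by (auto simp: t_def L_def field_simps)
    have tL: "t * L = x - a" using L by (simp add: t_def)
    have xe: "x = (1 - t) *\<^sub>R a + t *\<^sub>R b" using tL by (simp add: L_def algebra_simps)
    have cf: "f x \<le> (1 - t) * f a + t * f b"
      using convex_onD[OF assms(3) t, of a b] xe assms(2) by auto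
    have cg: "g x \<le> (1 - t) * g a + t * g b"
      using convex_onD[OF assms(4) t, of a b] xe assms(2) by auto
    have e: "(b - x) / (b - a) = 1 - t" using L by (simp add: t_def L_def field_simps)
    have "I x \<le> t * f x + (1 - t) * g x"
      unfolding I_def e using pow00_young[of "f x" "g x" t] t assms(5,6) x
      by (simp add: t_def L_def)
    also have "\<dots> \<le> t * ((1 - t) * f a + t * f b) + (1 - t) * ((1 - t) * g a + t * g b)"
      using cf cg t by (intro add_mono mult_left_mono) auto
    also have "\<dots> = P x" by (simp add: P_def t_def[symmetric] power2_eq_square algebra_simps)
    finally show ?thesis .
  qed
  show ?thesis
  proof (cases "set_integrable lborel {a..b} I")
    case True
    have "(LINT x:{a..b}|lborel. I x) \<le> (LINT x:{a..b}|lborel. P x)"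
      by (rule set_integral_mono[OF True Pint pt])
    then have "(1/(b-a)) * (LINT x:{a..b}|lborel. I x) \<le> (1/L) * (F b - F a)"
      using L PI by (simp add: L_def divide_right_mono)
    also have "\<dots> = (1/3) * (f b + g a) + (1/6) * (g b + f a)" using Fba L by simp
    finally show ?thesis unfolding I_def .
  next
    case False
    then have "(LINT x:{a..b}|lborel. I x) = 0"
      unfolding set_integrable_def set_lebesgue_integral_def
      by (simp add: not_integrable_integral_eq)
    then show ?thesis using RHS unfolding I_def by simp
  qed
qed

end
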